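(* Let $\Pi$ be an $\mathit{LP}^{\mathit{MLN}}$ program and let $\mathrm{trans}_2(\Pi)$ be the $\mathit{LP}^{\mathit{MLN}\pm}$ program whose hard formulas are $\{\alpha : F \vee \neg F \mid w : F \in \Pi\}$, whose soft integrity constraints are $\{w : \neg\neg F \mid w : F \in \Pi,\ w \neq \alpha\}$, and whose weak constraints are $\{:\sim F\,[-1,1] \mid w : F \in \Pi,\ w = \alpha\}$. Then for every interpretation $X$, $P_\Pi(X) = P^{\pm}_{\mathrm{trans}_2(\Pi)}(X)$.
   Context: Fix a finite set of propositional atoms; an interpretation is a set $X$ of atoms. For a set $\Gamma$ of propositional formulas, the reduct $\Gamma^X$ is obtained by replacing every maximal subformula of each formula of $\Gamma$ not satisfied by $X$ by $\bot$; $X$ is a stable model of $\Gamma$ if $X$ is a minimal model of $\Gamma^X$ (Ferraris' semantics). $\mathrm{SM}(\Gamma)$ is the set of stable models of $\Gamma$. A weak constraint has the form $:\sim F\,[w,l]$ with $F$ a formula, $w$ a real number and $l$ a nonnegative integer (the level). For a set $\Gamma_1$ of formulas and a set $\Gamma_2$ of weak constraints, the cost of $X$ at level $l$ is $\mathrm{cost}_l(X)=\sum\{w \mid :\sim F[w,l]\in\Gamma_2,\ X\models F\}$; the optimal stable models of $\Gamma_1\cup\Gamma_2$ are those $X\in\mathrm{SM}(\Gamma_1)$ for which there is no $Y\in\mathrm{SM}(\Gamma_1)$ and level $l$ with $\mathrm{cost}_l(Y)<\mathrm{cost}_l(X)$ and $\mathrm{cost}_{l'}(Y)=\mathrm{cost}_{l'}(X)$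 for all $l'>l$. An $\mathit{LP}^{\mathit{MLN}}$ program $\Pi$ is a finite set of weighted formulas $w:F$, $F$ a propositional formula, $w$ a real number (soft) or $\alpha$ (hard, infinite weight). For a set $\Sigma$ of weighted formulas, $\overline{\Sigma}$ drops the weights, $\Sigma_X=\{w:F\in\Sigma \mid X\models F\}$, and $\mathrm{TW}(\Sigma)=\exp(\sum_{w:F\in\Sigma} w)$ (with $\alpha$ treated as a real parameter). $\mathrm{SSM}(\Pi)=\{X \mid X$ is a stable model of $\overline{\Pi_X}\}$; $W_\Pi(X)=\mathrm{TW}(\Pi_X)$ if $X\in\mathrm{SSM}(\Pi)$ and $0$ otherwise; and $P_\Pi(X)=\lim_{\alpha\to\infty} W_\Pi(X)/\sum_{Y\in\mathrm{SSM}(\Pi)}W_\Pi(Y)$. An $\mathit{LP}^{\mathit{MLN}\pm}$ program $\Pi'$ is a set consisting of hard formulas $\alpha:F$ (set $\mathrm{hard}(\Pi')$), soft integrity constraints $w:\neg F$ with $w$ real (set $\mathrm{soft}(\Pi')$), and weak constraints (set $\mathrm{weak}(\Pi')$). $\mathrm{OSM}(\Pi')$ is the set of optimal stable models of $\overline{\mathrm{hard}(\Pi')}\cup\mathrm{weak}(\Pi')$. $W^{\pm}_{\Pi'}(X)=\mathrm{TW}(\mathrm{soft}(\Pi')_X)$ if $X\in\mathrm{OSM}(\Pi')$ and $0$ otherwise, and $P^{\pm}_{\Pi'}(X)=W^{\pm}_{\Pi'}(X)/\sum_{Y\in\mathrm{OSM}(\Pi')}W^{\pm}_{\Pi'}(Y)$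 (undefined if $\mathrm{OSM}(\Pi')$ is empty). *)

theory Defs
  imports Complex_Main
begin

datatype 'a form = Bot | Atom 'a | And "'a form" "'a form" | Or "'a form" "'a form"
  | Imp "'a form" "'a form"

definition Neg :: "'a form \<Rightarrow> 'a form" where
  "Neg F = Imp F Bot"

fun sat :: "'a set \<Rightarrow> 'a form \<Rightarrow> bool" where
  "sat X Bot = False"
| "sat X (Atom p) = (p \<in> X)"
| "sat X (And F G) = (sat X F \<and> sat X G)"
| "sat X (Or F G) = (sat X F \<or> sat X G)"
| "sat X (Imp F G) = (sat X F \<longrightarrow> sat X G)"

fun red :: "'a set \<Rightarrow> 'a form \<Rightarrow> 'a form" where
  "red X Bot = Bot"
| "red X (Atom p) = (if p \<in> X then Atom p else Bot)"
| "red X (And F G) = (if sat X (And F G) then And (red X F) (red X G) else Bot)"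
| "red X (Or F G) = (if sat X (Or F G) then Or (red X F) (red X G) else Bot)"
| "red X (Imp F G) = (if sat X (Imp F G) then Imp (red X F) (red X G) else Bot)"

definition models :: "'a set \<Rightarrow> 'a form set \<Rightarrow> bool" where
  "models X \<Gamma> = (\<forall>F\<in>\<Gamma>. sat X F)"

definition stable_model :: "'a set \<Rightarrow> 'a form set \<Rightarrow> bool" where
  "stable_model X \<Gamma> =
     (models X (red X ` \<Gamma>) \<and> (\<forall>Y. Y \<subset> X \<longrightarrow> \<not> models Y (red X ` \<Gamma>)))"

definition SM :: "'a form set \<Rightarrow> 'a set set" where
  "SM \<Gamma> = {X. stable_model X \<Gamma>}"

text \<open>A weak constraint  :~ F [w,l]  is represented by the triple (F, w, l).\<close>
type_synonym 'a weak = "'a form \<times> real \<times> nat"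

definition cost :: "'a weak set \<Rightarrow> nat \<Rightarrow> 'a set \<Rightarrow> real" where
  "cost \<Gamma>2 l X = (\<Sum>(F, w, l') \<in> {c \<in> \<Gamma>2. snd (snd c) = l \<and> sat X (fst c)}. w)"

definition optimal_SM :: "'a form set \<Rightarrow> 'a weak set \<Rightarrow> 'a set set" where
  "optimal_SM \<Gamma>1 \<Gamma>2 = {X \<in> SM \<Gamma>1. \<not> (\<exists>Y \<in> SM \<Gamma>1. \<exists>l.
       cost \<Gamma>2 l Y < cost \<Gamma>2 l X \<and> (\<forall>l'>l. cost \<Gamma>2 l' Y = cost \<Gamma>2 l' X))}"

datatype weight = Real real | Alpha

type_synonym 'a lpmln = "(weight \<times> 'a form) set"

fun wval :: "real \<Rightarrow> weight \<Rightarrow> real" where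
  "wval a (Real w) = w"
| "wval a Alpha = a"

definition sat_part :: "'a set \<Rightarrow> 'a lpmln \<Rightarrow> 'a lpmln" where
  "sat_part X \<Pi> = {wF \<in> \<Pi>. sat X (snd wF)}"

definition TW :: "real \<Rightarrow> 'a lpmln \<Rightarrow> real" where
  "TW a \<Sigma> = exp (\<Sum>(w, F) \<in> \<Sigma>. wval a w)"

definition SSM :: "'a lpmln \<Rightarrow> 'a set set" where
  "SSM \<Pi> = {X. stable_model X (snd ` sat_part X \<Pi>)}"

definition W_mln :: "'a lpmln \<Rightarrow> real \<Rightarrow> 'a set \<Rightarrow> real" where
  "W_mln \<Pi> a X = (if X \<in> SSM \<Pi> then TW a (sat_part X \<Pi>) else 0)"

definition P_ratio :: "'a lpmln \<Rightarrow> real \<Rightarrow> 'a set \<Rightarrow> real" where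
  "P_ratio \<Pi> a X = W_mln \<Pi> a X / (\<Sum>Y \<in> SSM \<Pi>. W_mln \<Pi> a Y)"

definition P_mln :: "'a lpmln \<Rightarrow> 'a set \<Rightarrow> real" where
  "P_mln \<Pi> X = Lim at_top (\<lambda>a. P_ratio \<Pi> a X)"

text \<open>hard part (formulas F of alpha:F), soft integrity constraints (w, \<not>F),
  and weak constraints.\<close>
record 'a lpmln_pm =
  hard :: "'a form set"
  soft :: "(real \<times> 'a form) set"
  weak :: "'a weak set"

definition OSM :: "'a lpmln_pm \<Rightarrow> 'a set set" where
  "OSM \<Pi>' = optimal_SM (hard \<Pi>') (weak \<Pi>')"

definition W_pm :: "'a lpmln_pm \<Rightarrow> 'a set \<Rightarrow> real" where
  "W_pm \<Pi>' X = (if X \<in> OSM \<Pi>'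
     then exp (\<Sum>(w, F) \<in> {wF \<in> soft \<Pi>'. sat X (snd wF)}. w) else 0)"

definition P_pm :: "'a lpmln_pm \<Rightarrow> 'a set \<Rightarrow> real" where
  "P_pm \<Pi>' X = W_pm \<Pi>' X / (\<Sum>Y \<in> OSM \<Pi>'. W_pm \<Pi>' Y)"

definition trans2 :: "'a lpmln \<Rightarrow> 'a lpmln_pm" where
  "trans2 \<Pi> = \<lparr> hard = {Or F (Neg F) | w F. (w, F) \<in> \<Pi>},
                 soft = {(w, Neg (Neg F)) | w F. (Real w, F) \<in> \<Pi>},
                 weak = {(F, -1, 1) | F. (Alpha, F) \<in> \<Pi>} \<rparr>"

end

theory Submission imports Defs "HOL-Real_Asymp.Real_Asymp" begin

lemma red_or_neg: "sat Y (red X (Or F (Neg F))) = (sat X F \<longrightarrow> sat Y (red X F))"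
  by (auto simp: Neg_def)

lemma SSM_eq: "SSM \<Pi> = SM (hard (trans2 \<Pi>))"
proof -
  have "models Y (red X ` hard (trans2 \<Pi>)) = models Y (red X ` snd ` sat_part X \<Pi>)" for X Y
    unfolding models_def trans2_def sat_part_def using red_or_neg by fastforce
  then show ?thesis unfolding SSM_def SM_def stable_model_def by simp
qed

lemma cost_eq:
  "cost (weak (trans2 \<Pi>)) l X = (if l = 1 then - real (card {F. (Alpha,F) \<in> \<Pi> \<and> sat X F}) else 0)"
proof -
  have e: "{c \<in> weak (trans2 \<Pi>). snd (snd c) = l \<and> sat X (fst c)} =
     (if l = 1 then (\<lambda>F. (F, -1::real, 1::nat)) ` {F. (Alpha,F) \<in> \<Pi> \<and> sat X F} else {})"
    unfolding trans2_def by auto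
  show ?thesis unfolding cost_def e
    by (simp add: sum.reindex inj_on_def)
qed

lemma wval_split: "wval a w = wval 0 w + a * (if w = Alpha then 1 else 0)"
  by (cases w) auto

lemma sum_split:
  assumes "finite \<Pi>"
  shows "(\<Sum>(w, F) \<in> sat_part X \<Pi>. wval a w) = (\<Sum>(w, F) \<in> sat_part X \<Pi>. wval 0 w)
     + a * real (card {F. (Alpha,F) \<in> \<Pi> \<and> sat X F})"
proof -
  have fin: "finite (sat_part X \<Pi>)" using assms by (simp add: sat_part_def)
  have "(\<Sum>(w, F) \<in> sat_part X \<Pi>. wval a w) = (\<Sum>(w, F) \<in> sat_part X \<Pi>. wval 0 w)
     + a * (\<Sum>(w, F) \<in> sat_part X \<Pi>. (if w = Alpha then 1 else 0))"
    apply (subst wval_split) by (simp add: sum.distrib sum_distrib_left case_prod_unfold)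
  moreover have "(\<Sum>(w, F) \<in> sat_part X \<Pi>. (if w = Alpha then 1 else 0)) =
       (\<Sum>x \<in> {x \<in> sat_part X \<Pi>. fst x = Alpha}. (1::real))"
    using fin by (simp add: sum.If_cases case_prod_unfold Int_def)
  moreover have "{x \<in> sat_part X \<Pi>. fst x = Alpha} = (\<lambda>F. (Alpha, F)) ` {F. (Alpha,F) \<in> \<Pi> \<and> sat X F}"
    unfolding sat_part_def by force
  moreover have "card ((\<lambda>F. (Alpha, F)) ` {F. (Alpha,F) \<in> \<Pi> \<and> sat X F}) = card {F. (Alpha,F) \<in> \<Pi> \<and> sat X F}"
    by (simp add: card_image inj_on_def)
  ultimately show ?thesis by simp
qed

lemma soft_eq:
  assumes "finite \<Pi>"
  shows "(\<Sum>(w, F) \<in> {wF \<in> soft (trans2 \<Pi>). sat X (snd wF)}. w) = (\<Sum>(w, F) \<in> sat_part X \<Pi>. wval 0 w)"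
proof -
  let ?R = "{(r,F). (Real r,F) \<in> \<Pi> \<and> sat X F}"
  have fin: "finite (sat_part X \<Pi>)" using assms by (simp add: sat_part_def)
  have 1: "{wF \<in> soft (trans2 \<Pi>). sat X (snd wF)} = (\<lambda>(r,F). (r, Neg (Neg F))) ` ?R"
    unfolding trans2_def by (auto simp: Neg_def)
  have 2: "(\<Sum>(w, F) \<in> sat_part X \<Pi>. wval 0 w) = (\<Sum>(w, F) \<in> (\<lambda>(r,F). (Real r, F)) ` ?R. wval 0 w)"
  proof (rule sum.mono_neutral_right[OF fin])
    show "(\<lambda>(r,F). (Real r, F)) ` ?R \<subseteq> sat_part X \<Pi>" unfolding sat_part_def by auto
    show "\<forall>i\<in>sat_part X \<Pi> - (\<lambda>(r,F). (Real r, F)) ` ?R. (case i of (w, F) \<Rightarrow> wval 0 w) = 0"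
    proof
      fix i assume "i \<in> sat_part X \<Pi> - (\<lambda>(r,F). (Real r, F)) ` ?R"
      then show "(case i of (w, F) \<Rightarrow> wval 0 w) = 0"
        unfolding sat_part_def by (cases i; cases "fst i") (auto simp: image_iff)
    qed
  qed
  show ?thesis unfolding 1 2
    by (simp add: sum.reindex inj_on_def Neg_def case_prod_unfold)
qed

lemma sat_red: "sat X (red X F) = sat X F"
  by (induction F) auto

lemma exp_lim: "(d::real) < 0 \<Longrightarrow> ((\<lambda>a. exp (c + a * d)) \<longlongrightarrow> 0) at_top"
proof -
  assume d: "d < 0"
  have "filterlim (\<lambda>a. c + a * d) at_bot at_top"
    using d by real_asymp
  then show ?thesis using exp_at_bot filterlim_compose by blast
qed

lemma lex_lemma: "(\<exists>l::nat. (if l = 1 then - q else 0) < (if l = 1 then - p else (0::real)) \<and>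
   (\<forall>l'>l. (if l' = 1 then - q else 0) = (if l' = 1 then - p else 0))) = (p < q)"
proof
  assume "\<exists>l::nat. (if l = 1 then - q else 0) < (if l = 1 then - p else (0::real)) \<and>
   (\<forall>l'>l. (if l' = 1 then - q else 0) = (if l' = 1 then - p else 0))"
  then obtain l :: nat where "(if l = 1 then - q else 0) < (if l = 1 then - p else (0::real))" by blast
  then show "p < q" by (cases "l = 1") auto
next
  assume "p < q"
  then show "\<exists>l::nat. (if l = 1 then - q else 0) < (if l = 1 then - p else (0::real)) \<and>
   (\<forall>l'>l. (if l' = 1 then - q else 0) = (if l' = 1 then - p else 0))"
    by (intro exI[of _ 1]) auto
qed

theorem proposition2:
  fixes \<Pi> :: "('a::finite) lpmln" and X :: "'a set"
  assumes "finite \<Pi>"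
  shows "OSM (trans2 \<Pi>) \<noteq> {}
     \<and> ((\<lambda>a. P_ratio \<Pi> a X) \<longlongrightarrow> P_pm (trans2 \<Pi>) X) at_top
     \<and> P_mln \<Pi> X = P_pm (trans2 \<Pi>) X"
proof -
  define S where "S = SSM \<Pi>"
  define h where "h Y = real (card {F. (Alpha,F) \<in> \<Pi> \<and> sat Y F})" for Y
  define s where "s Y = (\<Sum>(w, F) \<in> sat_part Y \<Pi>. wval 0 w)" for Y
  have finS: "finite S" by (rule finite_subset[of _ UNIV]) auto
  have emp: "{} \<in> S"
    unfolding S_def SSM_def stable_model_def models_def by (auto simp: sat_red sat_part_def)
  define M where "M = Max (h ` S)"
  have hM: "Y \<in> S \<Longrightarrow> h Y \<le> M" for Y unfolding M_def using finS by simp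
  have OSM_eq: "OSM (trans2 \<Pi>) = {Y \<in> S. h Y = M}"
  proof -
    have "OSM (trans2 \<Pi>) = {X \<in> S. \<not> (\<exists>Y\<in>S. h X < h Y)}"
      unfolding OSM_def optimal_SM_def SSM_eq[symmetric] S_def[symmetric] cost_eq h_def
      by (simp add: lex_lemma)
    also have "\<dots> = {Y \<in> S. h Y = M}"
    proof -
      have "M \<in> h ` S" unfolding M_def using finS emp by (intro Max_in) auto
      then show ?thesis using hM by (force simp: not_less)
    qed
    finally show ?thesis .
  qed
  define Opt where "Opt = {Y \<in> S. h Y = M}"
  have One: "Opt \<noteq> {}"
  proof -
    have "M \<in> h ` S" unfolding M_def using finS emp by (intro Max_in) auto
    then show ?thesis unfolding Opt_def by auto
  qed
  have OS: "Opt \<subseteq> S" unfolding Opt_def by auto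
  have Wpm: "W_pm (trans2 \<Pi>) Y = (if Y \<in> Opt then exp (s Y) else 0)" for Y
    unfolding W_pm_def OSM_eq Opt_def[symmetric] s_def using soft_eq[OF assms] by simp
  define g where "g a Y = (if Y \<in> S then exp (s Y + a * (h Y - M)) else 0)" for a Y
  have Wm: "W_mln \<Pi> a Y = exp (a * M) * g a Y" for a Y
  proof -
    have "exp (a * M) * exp (s Y + a * (h Y - M)) = exp (s Y + a * h Y)"
      by (simp add: exp_add[symmetric] algebra_simps)
    then show ?thesis
      unfolding W_mln_def g_def TW_def S_def[symmetric] using sum_split[OF assms, where X=Y and a=a]
      by (simp add: s_def h_def)
  qed
  have Pr: "P_ratio \<Pi> a X = g a X / (\<Sum>Y\<in>S. g a Y)" for a
    unfolding P_ratio_def Wm S_def[symmetric] sum_distrib_left[symmetric] by simp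
  have glim: "((\<lambda>a. g a Y) \<longlongrightarrow> W_pm (trans2 \<Pi>) Y) at_top" for Y
  proof (cases "Y \<in> S")
    case False
    then show ?thesis using OS by (auto simp: g_def Wpm)
  next
    case True
    show ?thesis
    proof (cases "h Y = M")
      case True
      then show ?thesis using \<open>Y \<in> S\<close> by (simp add: g_def Wpm Opt_def)
    next
      case False
      then have "h Y - M < 0" using hM[OF \<open>Y \<in> S\<close>] by simp
      then show ?thesis using \<open>Y \<in> S\<close> False exp_lim[of "h Y - M" "s Y"]
        by (simp add: g_def Wpm Opt_def)
    qed
  qed
  have sumeq: "(\<Sum>Y\<in>S. W_pm (trans2 \<Pi>) Y) = (\<Sum>Y\<in>OSM (trans2 \<Pi>). W_pm (trans2 \<Pi>) Y)"
    unfolding OSM_eq Opt_def[symmetric]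
    by (rule sum.mono_neutral_right[OF finS OS]) (auto simp: Wpm)
  have pos: "(\<Sum>Y\<in>OSM (trans2 \<Pi>). W_pm (trans2 \<Pi>) Y) > 0"
    unfolding OSM_eq Opt_def[symmetric]
    using One finS OS by (intro sum_pos) (auto simp: Wpm intro: finite_subset)
  have lim: "((\<lambda>a. P_ratio \<Pi> a X) \<longlongrightarrow> P_pm (trans2 \<Pi>) X) at_top"
    unfolding Pr P_pm_def sumeq[symmetric]
    by (rule tendsto_divide[OF glim tendsto_sum[OF glim]]) (use pos sumeq in simp)
  moreover have "P_mln \<Pi> X = P_pm (trans2 \<Pi>) X"
    unfolding P_mln_def using lim by (intro tendsto_Lim) simp_all
  ultimately show ?thesis using One OSM_eq Opt_def by simp
qed

end
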